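(* Let $k\ge 1$ and let $n_1,\ldots,n_k\ge 3$ be (not necessarily distinct) integers such that $\gcd(k, n_1\cdots n_k)=1$. Then $C_{n_1}\Box\cdots\Box C_{n_k}$ is $\mathbb{Z}_{n_1\cdots n_k}$-distance antimagic if and only if all of $n_1,\ldots,n_k$ are odd. In particular, if $k\ge1$ and the odd integer $n\ge 3$ are coprime, then the Cartesian product of $k$ copies of $C_n$ is $\mathbb{Z}_{n^k}$-distance antimagic.
   Context: $C_n$ is the cycle of length $n$. The Cartesian product $G_1\Box\cdots\Box G_k$ has vertex set $V(G_1)\times\cdots\times V(G_k)$, with two tuples adjacent iff they differ in exactly one coordinate $i$ and are adjacent there in $G_i$. For a graph $G$ with $n$ vertices, a $\mathbb{Z}_n$-distance antimagic labelling is a bijection $f:V(G)\to\mathbb{Z}_n$ such that the weights $w_f(x)=\sum_{y\in N(x)} f(y)$ (mod $n$, $N(x)$ the open neighbourhood) are pairwise distinct; $G$ is $\mathbb{Z}_n$-distance antimagic if such a labelling exists. *)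

theory Defs
  imports Main
begin

definition cyc_adj :: "nat \<Rightarrow> nat \<Rightarrow> nat \<Rightarrow> bool" where
  "cyc_adj n a b \<longleftrightarrow> a < n \<and> b < n \<and> ((a + 1) mod n = b \<or> (b + 1) mod n = a)"

text \<open>Vertex set of C_{n_1} box ... box C_{n_k}, where ns = [n_1,...,n_k]: tuples as lists.\<close>
definition cprod_verts :: "nat list \<Rightarrow> nat list set" where
  "cprod_verts ns = {xs. length xs = length ns \<and> (\<forall>i<length ns. xs ! i < ns ! i)}"

definition cprod_adj :: "nat list \<Rightarrow> nat list \<Rightarrow> nat list \<Rightarrow> bool" where
  "cprod_adj ns xs ys \<longleftrightarrow> xs \<in> cprod_verts ns \<and> ys \<in> cprod_verts ns \<and>
     (\<exists>i<length ns. cyc_adj (ns ! i) (xs ! i) (ys ! i) \<and>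
        (\<forall>j<length ns. j \<noteq> i \<longrightarrow> xs ! j = ys ! j))"

text \<open>Z_n-distance antimagic, n = |V|; Z_n represented by {0..<n}, weights reduced mod n.\<close>
definition zn_distance_antimagic :: "'a set \<Rightarrow> ('a \<Rightarrow> 'a \<Rightarrow> bool) \<Rightarrow> bool" where
  "zn_distance_antimagic V E \<longleftrightarrow>
     (\<exists>f. bij_betw f V {0..<card V} \<and>
          inj_on (\<lambda>x. (\<Sum>y\<in>{y\<in>V. E x y}. f y) mod card V) V)"

end

theory Submission imports Defs "HOL-Number_Theory.Cong" begin

fun enc :: "nat list \<Rightarrow> nat list \<Rightarrow> nat" where
  "enc (n#ns) (x#xs) = x + n * enc ns xs"
| "enc _ _ = 0"

definition nbr :: "nat list \<Rightarrow> nat list \<Rightarrow> nat list set" where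
  "nbr ns x = {y \<in> cprod_verts ns. cprod_adj ns x y}"

definition W :: "nat list \<Rightarrow> nat list \<Rightarrow> nat" where
  "W ns x = (\<Sum>y\<in>nbr ns x. enc ns y)"

lemma V_Nil: "cprod_verts [] = {[]}"
  by (auto simp: cprod_verts_def)

lemma mem_V_Cons: "b#ys \<in> cprod_verts (n#ns) \<longleftrightarrow> b < n \<and> ys \<in> cprod_verts ns"
  by (auto simp: cprod_verts_def All_less_Suc2)

lemma V_Cons_E: "x \<in> cprod_verts (n#ns) \<Longrightarrow> \<exists>b ys. x = b#ys"
  by (cases x) (auto simp: cprod_verts_def)

lemma V_Cons: "cprod_verts (n#ns) = (\<lambda>(b,ys). b#ys) ` ({0..<n} \<times> cprod_verts ns)"
proof safe
  fix x assume "x \<in> cprod_verts (n#ns)"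
  then obtain b ys where "x = b#ys" "b < n" "ys \<in> cprod_verts ns"
    using V_Cons_E mem_V_Cons by blast
  then show "x \<in> (\<lambda>(b,ys). b#ys) ` ({0..<n} \<times> cprod_verts ns)"
    by (force intro: rev_image_eqI)
qed (auto simp: mem_V_Cons)

lemma enc_bij: "bij_betw (enc ns) (cprod_verts ns) {0..<prod_list ns}"
proof (induction ns)
  case Nil
  then show ?case by (simp add: V_Nil bij_betw_def)
next
  case (Cons n ns)
  have inj: "inj_on (enc (n#ns)) (cprod_verts (n#ns))"
  proof (rule inj_onI)
    fix x y assume x: "x \<in> cprod_verts (n#ns)" and y: "y \<in> cprod_verts (n#ns)"
      and e: "enc (n#ns) x = enc (n#ns) y"
    obtain a xs where xa: "x = a#xs" using V_Cons_E[OF x] by blast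
    obtain b ys where yb: "y = b#ys" using V_Cons_E[OF y] by blast
    have a: "a < n" "xs \<in> cprod_verts ns" using x xa mem_V_Cons by auto
    have b: "b < n" "ys \<in> cprod_verts ns" using y yb mem_V_Cons by auto
    have e2: "a + n * enc ns xs = b + n * enc ns ys" using e xa yb by simp
    then have "(a + n * enc ns xs) mod n = (b + n * enc ns ys) mod n" by simp
    then have ab: "a = b" using a b by simp
    then have "enc ns xs = enc ns ys" using e2 a by simp
    then have "xs = ys" using Cons.IH a b unfolding bij_betw_def inj_on_def by blast
    then show "x = y" using xa yb ab by simp
  qed
  have img: "enc (n#ns) ` cprod_verts (n#ns) = {0..<prod_list (n#ns)}"
  proof
    show "enc (n#ns) ` cprod_verts (n#ns) \<subseteq> {0..<prod_list (n#ns)}"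
    proof
      fix m assume "m \<in> enc (n#ns) ` cprod_verts (n#ns)"
      then obtain a xs where a: "a < n" "xs \<in> cprod_verts ns" and m: "m = a + n * enc ns xs"
        by (auto simp: V_Cons)
      have "enc ns xs < prod_list ns" using Cons.IH a unfolding bij_betw_def by auto
      then have "enc ns xs + 1 \<le> prod_list ns" by simp
      then have "n * (enc ns xs + 1) \<le> n * prod_list ns" by (rule mult_le_mono2)
      then show "m \<in> {0..<prod_list (n#ns)}" using m a by (simp add: algebra_simps)
    qed
  next
    show "{0..<prod_list (n#ns)} \<subseteq> enc (n#ns) ` cprod_verts (n#ns)"
    proof
      fix m assume m: "m \<in> {0..<prod_list (n#ns)}"
      then have mlt: "m < n * prod_list ns" by simp
      then have n0: "n > 0" by (cases n) auto
      have "m div n < prod_list ns" using less_mult_imp_div_less[of m "prod_list ns" n] mlt by (simp add: mult.commute)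
      then obtain xs where xs: "xs \<in> cprod_verts ns" "enc ns xs = m div n"
        using Cons.IH unfolding bij_betw_def by (metis atLeastLessThan_iff imageE zero_le)
      have "m mod n # xs \<in> cprod_verts (n#ns)" using xs n0 by (simp add: mem_V_Cons)
      moreover have "enc (n#ns) (m mod n # xs) = m" using xs by simp
      ultimately show "m \<in> enc (n#ns) ` cprod_verts (n#ns)" by force
    qed
  qed
  show ?case using inj img by (simp add: bij_betw_def)
qed

lemma card_V: "card (cprod_verts ns) = prod_list ns"
  using bij_betw_same_card[OF enc_bij] by simp

lemma finite_V: "finite (cprod_verts ns)"
  using bij_betw_finite[OF enc_bij] by simp

lemma cyc_iff:
  assumes "n \<ge> 3" "a < n" "b < n"
  shows "cyc_adj n a b \<longleftrightarrow> b = (a+1) mod n \<or> b = (a+n-1) mod n"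
proof -
  have "(b+1) mod n = a \<longleftrightarrow> b = (a+n-1) mod n"
  proof (cases "a = 0")
    case True
    then show ?thesis using assms
      by (cases "b+1 = n") (auto simp: mod_if)
  next
    case False
    then show ?thesis using assms by (auto simp: mod_if)
  qed
  then show ?thesis using assms by (auto simp: cyc_adj_def)
qed

lemma adj_Cons:
  assumes x: "a#xs \<in> cprod_verts (n#ns)" and y: "b#ys \<in> cprod_verts (n#ns)"
  shows "cprod_adj (n#ns) (a#xs) (b#ys) \<longleftrightarrow>
     (cyc_adj n a b \<and> xs = ys) \<or> (a = b \<and> cprod_adj ns xs ys)"
proof -
  have lx: "length xs = length ns" and ly: "length ys = length ns"
    using x y by (auto simp: mem_V_Cons cprod_verts_def)
  have xs: "xs \<in> cprod_verts ns" and ys: "ys \<in> cprod_verts ns" using x y mem_V_Cons by auto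
  have eq: "(\<forall>j<length ns. xs ! j = ys ! j) \<longleftrightarrow> xs = ys"
    using lx ly by (auto simp: list_eq_iff_nth_eq)
  have "cprod_adj (n#ns) (a#xs) (b#ys) \<longleftrightarrow>
     (cyc_adj n a b \<and> (\<forall>j<length ns. xs ! j = ys ! j)) \<or>
     (\<exists>i<length ns. cyc_adj (ns ! i) (xs ! i) (ys ! i) \<and> a = b \<and>
        (\<forall>j<length ns. j \<noteq> i \<longrightarrow> xs ! j = ys ! j))"
    using x y unfolding cprod_adj_def by (simp add: Ex_less_Suc2 All_less_Suc2)
  also have "\<dots> \<longleftrightarrow> (cyc_adj n a b \<and> xs = ys) \<or> (a = b \<and> cprod_adj ns xs ys)"
    using xs ys eq unfolding cprod_adj_def by blast
  finally show ?thesis .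
qed

lemma nbr_Nil: "nbr [] [] = {}"
  by (auto simp: nbr_def cprod_adj_def)

lemma nbr_Cons:
  assumes n: "n \<ge> 3" and a: "a < n" and xs: "xs \<in> cprod_verts ns"
  shows "nbr (n#ns) (a#xs) = {((a+1) mod n)#xs, ((a+n-1) mod n)#xs} \<union> (Cons a) ` nbr ns xs"
proof (rule set_eqI)
  fix y
  have ax: "a#xs \<in> cprod_verts (n#ns)" using a xs by (simp add: mem_V_Cons)
  show "y \<in> nbr (n#ns) (a#xs) \<longleftrightarrow> y \<in> {((a+1) mod n)#xs, ((a+n-1) mod n)#xs} \<union> (Cons a) ` nbr ns xs"
  proof
    assume "y \<in> nbr (n#ns) (a#xs)"
    then have yV: "y \<in> cprod_verts (n#ns)" and adj: "cprod_adj (n#ns) (a#xs) y" by (auto simp: nbr_def)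
    obtain b ys where yb: "y = b#ys" using V_Cons_E[OF yV] by blast
    have b: "b < n" "ys \<in> cprod_verts ns" using yV yb mem_V_Cons by auto
    have "(cyc_adj n a b \<and> xs = ys) \<or> (a = b \<and> cprod_adj ns xs ys)"
      using adj_Cons[OF ax yV[unfolded yb]] adj yb by simp
    then show "y \<in> {((a+1) mod n)#xs, ((a+n-1) mod n)#xs} \<union> (Cons a) ` nbr ns xs"
      using cyc_iff[OF n a b(1)] yb b by (auto simp: nbr_def)
  next
    assume y: "y \<in> {((a+1) mod n)#xs, ((a+n-1) mod n)#xs} \<union> (Cons a) ` nbr ns xs"
    have n0: "n > 0" using n by simp
    show "y \<in> nbr (n#ns) (a#xs)"
    proof (cases "y \<in> (Cons a) ` nbr ns xs")
      case True
      then obtain ys where ys: "y = a#ys" "ys \<in> cprod_verts ns" "cprod_adj ns xs ys"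
        by (auto simp: nbr_def)
      have yV: "a#ys \<in> cprod_verts (n#ns)" using ys a by (simp add: mem_V_Cons)
      show ?thesis using adj_Cons[OF ax yV] ys yV by (simp add: nbr_def)
    next
      case False
      then obtain b where yb: "y = b#xs" and b: "b = (a+1) mod n \<or> b = (a+n-1) mod n" using y by auto
      have bn: "b < n" using b n0 by auto
      have yV: "b#xs \<in> cprod_verts (n#ns)" using bn xs by (simp add: mem_V_Cons)
      have "cyc_adj n a b" using cyc_iff[OF n a bn] b by simp
      then show ?thesis using adj_Cons[OF ax yV] yb yV by (simp add: nbr_def)
    qed
  qed
qed

lemma succ_pred_facts:
  fixes n a :: nat
  assumes "n \<ge> 3" "a < n"
  shows "(a+1) mod n \<noteq> a" "(a+n-1) mod n \<noteq> a" "(a+1) mod n \<noteq> (a+n-1) mod n"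
proof -
  have s: "(a+1) mod n = (if a+1 = n then 0 else a+1)" using assms by (auto simp: mod_if)
  have p: "(a+n-1) mod n = (if a = 0 then n-1 else a-1)"
  proof (cases "a = 0")
    case True then show ?thesis using assms by simp
  next
    case False
    then have "a+n-1 = (a-1) + n" by simp
    then have "(a+n-1) mod n = (a-1) mod n" by simp
    then show ?thesis using False assms by simp
  qed
  show "(a+1) mod n \<noteq> a" "(a+n-1) mod n \<noteq> a" "(a+1) mod n \<noteq> (a+n-1) mod n"
    using s p assms by auto
qed

lemma nbr_card:
  "(\<forall>i<length ns. ns ! i \<ge> 3) \<Longrightarrow> xs \<in> cprod_verts ns \<Longrightarrow>
    finite (nbr ns xs) \<and> card (nbr ns xs) = 2 * length ns"
proof (induction ns arbitrary: xs)
  case Nil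
  then show ?case by (simp add: V_Nil nbr_Nil)
next
  case (Cons n ns)
  obtain a ys where xa: "xs = a#ys" using V_Cons_E[OF Cons.prems(2)] by blast
  have a: "a < n" "ys \<in> cprod_verts ns" using Cons.prems(2) xa mem_V_Cons by auto
  have n: "n \<ge> 3" using Cons.prems(1) by auto
  have IH: "finite (nbr ns ys) \<and> card (nbr ns ys) = 2 * length ns"
  proof -
    have "\<forall>i<length ns. ns ! i \<ge> 3" using Cons.prems(1) by (simp add: All_less_Suc2)
    then show ?thesis using Cons.IH[OF _ a(2)] by blast
  qed
  note sp = succ_pred_facts[OF n a(1)]
  have disj: "{((a+1) mod n)#ys, ((a+n-1) mod n)#ys} \<inter> (Cons a) ` nbr ns ys = {}"
    using sp by auto
  have c1: "card {((a+1) mod n)#ys, ((a+n-1) mod n)#ys} = 2" using sp by simp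
  have c2: "card ((Cons a) ` nbr ns ys) = 2 * length ns"
    using IH by (simp add: card_image)
  have cu: "card ({((a+1) mod n)#ys, ((a+n-1) mod n)#ys} \<union> (Cons a) ` nbr ns ys) = 2 + 2 * length ns"
    using card_Un_disjoint[of "{((a+1) mod n)#ys, ((a+n-1) mod n)#ys}" "(Cons a) ` nbr ns ys"] disj c1 c2 IH
    by simp
  show ?case unfolding xa nbr_Cons[OF n a] using cu IH by simp
qed

lemma W_rec:
  assumes ns: "\<forall>i<length ns. ns ! i \<ge> 3" and n: "n \<ge> 3" and a: "a < n" and xs: "xs \<in> cprod_verts ns"
  shows "W (n#ns) (a#xs) = (a+1) mod n + (a+n-1) mod n + 2*n*enc ns xs + 2 * length ns * a + n * W ns xs"
proof -
  have IH: "finite (nbr ns xs) \<and> card (nbr ns xs) = 2 * length ns" using nbr_card[OF ns xs] .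
  note sp = succ_pred_facts[OF n a]
  have disj: "{((a+1) mod n)#xs, ((a+n-1) mod n)#xs} \<inter> (Cons a) ` nbr ns xs = {}"
    using sp by auto
  have "W (n#ns) (a#xs) = (\<Sum>y\<in>{((a+1) mod n)#xs, ((a+n-1) mod n)#xs}. enc (n#ns) y)
      + (\<Sum>y\<in>(Cons a) ` nbr ns xs. enc (n#ns) y)"
    unfolding W_def nbr_Cons[OF n a xs] by (rule sum.union_disjoint) (use disj IH in auto)
  also have "(\<Sum>y\<in>{((a+1) mod n)#xs, ((a+n-1) mod n)#xs}. enc (n#ns) y)
      = (a+1) mod n + (a+n-1) mod n + 2*n*enc ns xs" using sp by simp
  also have "(\<Sum>y\<in>(Cons a) ` nbr ns xs. enc (n#ns) y) = (\<Sum>ys\<in>nbr ns xs. a + n * enc ns ys)"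
    by (simp add: sum.reindex)
  also have "\<dots> = 2 * length ns * a + n * W ns xs"
    using IH by (simp add: sum.distrib sum_distrib_left W_def)
  finally show ?thesis by simp
qed

lemma sp_mod:
  fixes n a X :: nat
  assumes "n \<ge> 3"
  shows "((a+1) mod n + (a+n-1) mod n + X) mod n = (2*a + X) mod n"
proof -
  have "((a+1) mod n + (a+n-1) mod n + X) mod n = ((a+1) + (a+n-1) + X) mod n"
    by (metis mod_add_eq mod_add_left_eq)
  also have "(a+1) + (a+n-1) + X = (2*a + X) + n" using assms by simp
  finally show ?thesis by simp
qed

lemma E_form:
  assumes ns: "\<forall>i<length ns. ns ! i \<ge> 3" and n: "n \<ge> 3" and a: "a < n" and xs: "xs \<in> cprod_verts ns"
  shows "c * enc (n#ns) (a#xs) + W (n#ns) (a#xs) =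
    ((a+1) mod n + (a+n-1) mod n + (c + 2 * length ns) * a) + n * ((c+2) * enc ns xs + W ns xs)"
  unfolding W_rec[OF ns n a xs] by (simp add: algebra_simps)

lemma inj_W:
  "(\<forall>i<length ns. ns ! i \<ge> 3) \<Longrightarrow> (\<forall>i<length ns. coprime (c + 2 * length ns) (ns ! i)) \<Longrightarrow>
   x \<in> cprod_verts ns \<Longrightarrow> y \<in> cprod_verts ns \<Longrightarrow>
   (c * enc ns x + W ns x) mod prod_list ns = (c * enc ns y + W ns y) mod prod_list ns \<Longrightarrow> x = y"
proof (induction ns arbitrary: c x y)
  case Nil
  then show ?case by (simp add: V_Nil)
next
  case (Cons n ns)
  obtain a xs where xa: "x = a#xs" using V_Cons_E[OF Cons.prems(3)] by blast
  obtain b ys where yb: "y = b#ys" using V_Cons_E[OF Cons.prems(4)] by blast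
  have a: "a < n" "xs \<in> cprod_verts ns" using Cons.prems(3) xa mem_V_Cons by auto
  have b: "b < n" "ys \<in> cprod_verts ns" using Cons.prems(4) yb mem_V_Cons by auto
  have n: "n \<ge> 3" using Cons.prems(1) by auto
  have ns: "\<forall>i<length ns. ns ! i \<ge> 3" using Cons.prems(1) by (simp add: All_less_Suc2)
  have cop: "coprime (c + 2 * length ns + 2) n" "\<forall>i<length ns. coprime (c + 2 + 2 * length ns) (ns ! i)"
    using Cons.prems(2) by (simp_all add: All_less_Suc2 algebra_simps)
  define k where "k = c + 2 * length ns"
  define R where "R zs = (c+2) * enc ns zs + W ns zs" for zs
  define T where "T z = (z+1) mod n + (z+n-1) mod n + k * z" for z
  have ex: "c * enc (n#ns) (a#xs) + W (n#ns) (a#xs) = T a + n * R xs"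
    unfolding T_def R_def k_def using E_form[OF ns n a(1) a(2)] by simp
  have ey: "c * enc (n#ns) (b#ys) + W (n#ns) (b#ys) = T b + n * R ys"
    unfolding T_def R_def k_def using E_form[OF ns n b(1) b(2)] by simp
  have main: "(T a + n * R xs) mod (n * prod_list ns) = (T b + n * R ys) mod (n * prod_list ns)"
    using Cons.prems(5) ex ey xa yb by simp
  then have "(T a + n * R xs) mod (n * prod_list ns) mod n = (T b + n * R ys) mod (n * prod_list ns) mod n"
    by simp
  then have "(T a + n * R xs) mod n = (T b + n * R ys) mod n"
    by (simp add: mod_mod_cancel)
  then have "T a mod n = T b mod n" by simp
  moreover have Ta: "T z mod n = ((k+2)*z) mod n" for z
  proof -
    have "T z mod n = (2*z + k*z) mod n" unfolding T_def by (rule sp_mod[OF n])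
    also have "2*z+k*z = (k+2)*z" by (simp add: algebra_simps)
    finally show ?thesis .
  qed
  ultimately have "((k+2) * a) mod n = ((k+2) * b) mod n" by simp
  then have "[(k+2) * a = (k+2) * b] (mod n)" by (simp add: cong_def)
  then have "[a = b] (mod n)" using cong_mult_lcancel_nat[of "k+2" n a b] cop(1) unfolding k_def by simp
  then have ab: "a = b" using a b by (simp add: cong_def)
  have "(n * R xs) mod (n * prod_list ns) = (n * R ys) mod (n * prod_list ns)"
    using main ab by (metis cong_add_lcancel_nat cong_def)
  then have "n * (R xs mod prod_list ns) = n * (R ys mod prod_list ns)"
    by (simp add: mod_mult_mult1)
  then have "R xs mod prod_list ns = R ys mod prod_list ns" using n by simp
  then have "xs = ys" using Cons.IH[OF ns cop(2) a(2) b(2)] unfolding R_def by simp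
  then show ?case using xa yb ab by simp
qed

lemma cyc_sym: "cyc_adj n a b \<Longrightarrow> cyc_adj n b a"
  unfolding cyc_adj_def by blast

lemma adj_sym: assumes "cprod_adj ns x y" shows "cprod_adj ns y x"
  using assms unfolding cprod_adj_def
  apply (elim conjE exE)
  apply (intro conjI)
    apply assumption
   apply assumption
  subgoal for i
    apply (rule exI[of _ i])
    apply (intro conjI)
      apply assumption
     apply (erule cyc_sym)
    apply (intro allI impI)
    apply (erule allE, erule impE, assumption, erule impE, assumption)
    apply (erule sym)
    done
  done

lemma nth_dvd_prod: "i < length ns \<Longrightarrow> ns ! i dvd prod_list (ns :: nat list)"
  by (rule prod_list_dvd) simp

lemma suff:
  assumes ge: "\<forall>i<length ns. ns ! i \<ge> 3" and od: "\<forall>i<length ns. odd (ns ! i)"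
    and cp: "coprime (length ns) (prod_list ns)"
  shows "zn_distance_antimagic (cprod_verts ns) (cprod_adj ns)"
  unfolding zn_distance_antimagic_def
proof (intro exI conjI)
  show "bij_betw (enc ns) (cprod_verts ns) {0..<card (cprod_verts ns)}"
    using enc_bij card_V by simp
  have cop: "\<forall>i<length ns. coprime (0 + 2 * length ns) (ns ! i)"
  proof (intro allI impI)
    fix i assume i: "i < length ns"
    have "coprime (length ns) (ns ! i)"
      using coprime_divisors[OF dvd_refl nth_dvd_prod[OF i] cp] .
    moreover have "coprime 2 (ns ! i)" using od i by simp
    ultimately show "coprime (0 + 2 * length ns) (ns ! i)" by simp
  qed
  show "inj_on (\<lambda>x. (\<Sum>y\<in>{y \<in> cprod_verts ns. cprod_adj ns x y}. enc ns y) mod card (cprod_verts ns))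
     (cprod_verts ns)"
  proof (rule inj_onI)
    fix x y assume x: "x \<in> cprod_verts ns" and y: "y \<in> cprod_verts ns"
      and e: "(\<Sum>y\<in>{y \<in> cprod_verts ns. cprod_adj ns x y}. enc ns y) mod card (cprod_verts ns) =
        (\<Sum>ya\<in>{ya \<in> cprod_verts ns. cprod_adj ns y ya}. enc ns ya) mod card (cprod_verts ns)"
    have "(0 * enc ns x + W ns x) mod prod_list ns = (0 * enc ns y + W ns y) mod prod_list ns"
      using e by (simp add: W_def nbr_def card_V)
    then show "x = y" using inj_W[OF ge cop x y] by blast
  qed
qed

lemma nec:
  assumes ge: "\<forall>i<length ns. ns ! i \<ge> 3" and i: "i < length ns" and ev: "even (ns ! i)"
  shows "\<not> zn_distance_antimagic (cprod_verts ns) (cprod_adj ns)"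
proof
  assume "zn_distance_antimagic (cprod_verts ns) (cprod_adj ns)"
  then obtain f where bij: "bij_betw f (cprod_verts ns) {0..<prod_list ns}"
    and inj: "inj_on (\<lambda>x. (\<Sum>y\<in>{y \<in> cprod_verts ns. cprod_adj ns x y}. f y) mod prod_list ns) (cprod_verts ns)"
    unfolding zn_distance_antimagic_def card_V by blast
  define V where "V = cprod_verts ns"
  define N where "N = prod_list ns"
  define k where "k = length ns"
  define g where "g x = (\<Sum>y\<in>{y \<in> V. cprod_adj ns x y}. f y)" for x
  have fin: "finite V" unfolding V_def by (rule finite_V)
  have inj': "inj_on (\<lambda>x. g x mod N) V" using inj unfolding g_def V_def N_def by simp
  have evN: "even N" unfolding N_def using dvd_trans[OF ev nth_dvd_prod[OF i]] by simp
  have N0: "N > 0"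
  proof -
    have "0 \<notin> set ns" using ge by (auto simp: in_set_conv_nth)
    then show ?thesis unfolding N_def using prod_list_zero_iff[of ns] by (simp add: gr0I)
  qed
  obtain m where m: "N = 2 * m" using evN by (auto elim: evenE)
  have S: "(\<Sum>j\<in>{0..<N}. j) = m * (2*m - 1)"
  proof -
    have "(\<Sum>j\<in>{0..<N}. j) = (2 * (m * (2*m-1))) div 2" using Sum_Ico_nat[of 0 N] m
      by (simp add: mult.assoc)
    then show ?thesis by simp
  qed
  have sumf: "(\<Sum>y\<in>V. f y) = (\<Sum>j\<in>{0..<N}. j)"
    using sum.reindex_bij_betw[OF bij[folded V_def N_def], of "\<lambda>j. j"] by simp
  have "(\<Sum>x\<in>V. g x) = (\<Sum>y\<in>V. \<Sum>x\<in>{x \<in> V. cprod_adj ns x y}. f y)"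
    unfolding g_def by (rule sum.swap_restrict[OF fin fin])
  also have "\<dots> = (\<Sum>y\<in>V. (2 * k) * f y)"
  proof (rule sum.cong[OF refl])
    fix y assume y: "y \<in> V"
    have "{x \<in> V. cprod_adj ns x y} = nbr ns y" unfolding nbr_def V_def using adj_sym by blast
    then have "card {x \<in> V. cprod_adj ns x y} = 2 * k"
      using nbr_card[OF ge y[unfolded V_def]] k_def by simp
    then show "(\<Sum>x\<in>{x \<in> V. cprod_adj ns x y}. f y) = (2 * k) * f y" by simp
  qed
  also have "\<dots> = 2 * k * (\<Sum>y\<in>V. f y)" by (rule sum_distrib_left[symmetric])
  also have "\<dots> = 2 * k * (\<Sum>j\<in>{0..<N}. j)" by (simp only: sumf)
  finally have sg: "(\<Sum>x\<in>V. g x) = 2 * k * (\<Sum>j\<in>{0..<N}. j)" .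
  have "(\<lambda>x. g x mod N) ` V = {0..<N}"
  proof (rule card_subset_eq)
    show "(\<lambda>x. g x mod N) ` V \<subseteq> {0..<N}" using N0 by auto
    show "card ((\<lambda>x. g x mod N) ` V) = card {0..<N}"
      using card_image[OF inj'] card_V V_def N_def by simp
  qed simp
  then have bg: "bij_betw (\<lambda>x. g x mod N) V {0..<N}"
    using inj' by (simp add: bij_betw_def)
  have "(\<Sum>x\<in>V. g x mod N) = (\<Sum>j\<in>{0..<N}. j)"
    using sum.reindex_bij_betw[OF bg, of "\<lambda>j. j"] by simp
  moreover have "(\<Sum>x\<in>V. g x mod N) mod N = (\<Sum>x\<in>V. g x) mod N" by (rule mod_sum_eq)
  ultimately have "(\<Sum>j\<in>{0..<N}. j) mod N = (\<Sum>x\<in>V. g x) mod N" by simp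
  also have "\<dots> = 0"
  proof -
    have "(\<Sum>x\<in>V. g x) = 2 * k * (m * (2*m-1))" using sg S by simp
    also have "\<dots> = N * (k * (2*m-1))" using m by (simp add: algebra_simps)
    finally have "(\<Sum>x\<in>V. g x) = N * (k * (2*m-1))" .
    then show ?thesis by simp
  qed
  finally have "(\<Sum>j\<in>{0..<N}. j) mod N = 0" .
  then have "(m*(2*m-1)) mod (2*m) = 0" using S m by simp
  then have "2 * m dvd m * (2*m-1)" by (rule mod_0_imp_dvd)
  then have "m * 2 dvd m * (2*m-1)" by (simp only: mult.commute)
  moreover have "m > 0" using N0 m by simp
  ultimately have "2 dvd (2*m - 1)" by (simp only: nat_mult_dvd_cancel1)
  moreover have "odd (2*m - 1)" using \<open>m > 0\<close> by simp
  ultimately show False by simp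
qed

theorem mainTheorem13:
  shows "(\<forall>ns :: nat list. length ns \<ge> 1 \<longrightarrow> (\<forall>i<length ns. ns ! i \<ge> 3) \<longrightarrow>
            coprime (length ns) (prod_list ns) \<longrightarrow>
            (zn_distance_antimagic (cprod_verts ns) (cprod_adj ns) \<longleftrightarrow>
             (\<forall>i<length ns. odd (ns ! i))))
       \<and> (\<forall>k n :: nat. k \<ge> 1 \<longrightarrow> odd n \<longrightarrow> n \<ge> 3 \<longrightarrow> coprime k n \<longrightarrow>
            zn_distance_antimagic (cprod_verts (replicate k n)) (cprod_adj (replicate k n)))"
proof (intro conjI allI impI)
  fix ns :: "nat list"
  assume ge: "\<forall>i<length ns. ns ! i \<ge> 3" and cp: "coprime (length ns) (prod_list ns)"
  show "zn_distance_antimagic (cprod_verts ns) (cprod_adj ns) \<longleftrightarrow> (\<forall>i<length ns. odd (ns ! i))"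
  proof
    assume a: "zn_distance_antimagic (cprod_verts ns) (cprod_adj ns)"
    show "\<forall>i<length ns. odd (ns ! i)"
    proof (intro allI impI)
      fix i assume i: "i < length ns"
      show "odd (ns ! i)" using nec[OF ge i] a by blast
    qed
  next
    assume "\<forall>i<length ns. odd (ns ! i)"
    then show "zn_distance_antimagic (cprod_verts ns) (cprod_adj ns)" using suff[OF ge _ cp] by blast
  qed
next
  fix k n :: nat
  assume k: "k \<ge> 1" and od: "odd n" and n: "n \<ge> 3" and cp: "coprime k n"
  have ge: "\<forall>i<length (replicate k n). replicate k n ! i \<ge> 3" using n by simp
  have od': "\<forall>i<length (replicate k n). odd (replicate k n ! i)" using od by simp
  have cp': "coprime (length (replicate k n)) (prod_list (replicate k n))"
    using cp by simp
  show "zn_distance_antimagic (cprod_verts (replicate k n)) (cprod_adj (replicate k n))"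
    by (rule suff[OF ge od' cp'])
qed

end
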